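(* There is an absolute constant $K>0$ such that the following holds. Let $C\ge1$ be an integer and let $\xi\in(0,1)$ be an irrational number with partial quotients bounded by $C$. Let $N\ge 2$ and $1\le a\le N-1$ be integers with $\gcd(a,N)=1$, and put $\delta = \left|\xi - \frac{a}{N}\right|$. Then $\mathrm{gen}(a,N-a)$ is a binary word with exactly $N-1$ distinct subsequences and of length at most \[ K\left( C\log N + N\sqrt{\delta C^3}\right). \]
   Context: An irrational number $\theta$ with continued fraction $[c_0;c_1,c_2,\ldots]$ has partial quotients bounded by $C$ if $c_i\le C$ for all $i\ge0$. Words are over $\{\mathsf{A},\mathsf{B}\}$; the number of subsequences of a word counts distinct subsequences (not necessarily contiguous), the empty one included. For coprime integers $a,b\ge1$, $\mathrm{gen}(a,b)$ is defined recursively by: $\mathrm{gen}(1,1)$ is the empty word; $\mathrm{gen}(a,b)=\mathsf{A}\circ\mathrm{gen}(a-b,b)$ if $a>b$; $\mathrm{gen}(a,b)=\mathsf{B}\circ\mathrm{gen}(a,b-a)$ if $b>a$, where $\circ$ is concatenation. *)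

theory Defs
  imports Complex_Main "HOL-Library.Sublist"
begin

datatype letter = A | B

function gen :: "nat \<Rightarrow> nat \<Rightarrow> letter list" where
  "gen a b = (if a = 0 \<or> b = 0 \<or> a = b then []
              else if a > b then A # gen (a - b) b
              else B # gen a (b - a))"
  by pat_completeness auto
termination by (relation "measure (\<lambda>(a,b). a + b)") auto

definition num_subseqs :: "'a list \<Rightarrow> nat" where
  "num_subseqs w = card {v. subseq v w}"

fun cf_rem :: "real \<Rightarrow> nat \<Rightarrow> real" where
  "cf_rem x 0 = x"
| "cf_rem x (Suc n) = 1 / frac (cf_rem x n)"

definition partial_quotient :: "real \<Rightarrow> nat \<Rightarrow> int" where
  "partial_quotient x n = \<lfloor>cf_rem x n\<rfloor>"

definition pq_bounded_by :: "real \<Rightarrow> int \<Rightarrow> bool" where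
  "pq_bounded_by x C \<longleftrightarrow> (\<forall>i. partial_quotient x i \<le> C)"

end

theory Submission
  imports Defs
begin

declare gen.simps[simp del]

lemma gen_eq: "gen a a = []" "a > b \<Longrightarrow> b > 0 \<Longrightarrow> gen a b = A # gen (a-b) b"
  "b > a \<Longrightarrow> a > 0 \<Longrightarrow> gen a b = B # gen a (b-a)"
  by (subst gen.simps; simp)+

definition aft :: "letter \<Rightarrow> letter list \<Rightarrow> letter list" where
  "aft x w = tl (dropWhile (\<lambda>y. y \<noteq> x) w)"

definition Sx :: "letter \<Rightarrow> letter list \<Rightarrow> nat" where
  "Sx x w = (if x \<in> set w then num_subseqs (aft x w) else 0)"

lemma aft_Cons: "aft x (y#w) = (if y = x then w else aft x w)"
  by (simp add: aft_def)

lemma subseq_cons_iff: "subseq (x#v) w \<longleftrightarrow> x \<in> set w \<and> subseq v (aft x w)"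
  unfolding aft_def by (induction w) auto

lemma fin_subseqs: "finite {v. subseq v (w::'a list)}"
  by (metis List.finite_set set_subseqs_eq)

lemma num_subseqs_rec: "num_subseqs w = 1 + Sx A w + Sx B w"
proof -
  define SA where "SA = {v. A \<in> set w \<and> subseq v (aft A w)}"
  define SB where "SB = {v. B \<in> set w \<and> subseq v (aft B w)}"
  have eq: "{v. subseq v w} = insert [] (Cons A ` SA \<union> Cons B ` SB)"
  proof (rule set_eqI)
    fix v show "v \<in> {v. subseq v w} \<longleftrightarrow> v \<in> insert [] (Cons A ` SA \<union> Cons B ` SB)"
    proof (cases v)
      case Nil then show ?thesis by simp
    next
      case (Cons x v') then show ?thesis
        by (cases x) (auto simp: SA_def SB_def subseq_cons_iff)
    qed
  qed
  have fA: "finite SA" unfolding SA_def by (cases "A \<in> set w") (auto intro: fin_subseqs)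
  have fB: "finite SB" unfolding SB_def by (cases "B \<in> set w") (auto intro: fin_subseqs)
  have cA: "card (Cons A ` SA) = Sx A w"
    by (subst card_image) (auto simp: SA_def Sx_def num_subseqs_def)
  have cB: "card (Cons B ` SB) = Sx B w"
    by (subst card_image) (auto simp: SB_def Sx_def num_subseqs_def)
  have "card (Cons A ` SA \<union> Cons B ` SB) = card (Cons A ` SA) + card (Cons B ` SB)"
    by (rule card_Un_disjoint) (use fA fB in auto)
  moreover have "finite (Cons A ` SA \<union> Cons B ` SB)" using fA fB by simp
  moreover have "[] \<notin> Cons A ` SA \<union> Cons B ` SB" by auto
  ultimately show ?thesis unfolding num_subseqs_def eq
    by (simp add: cA cB card_insert_disjoint)
qed

lemma gen_count:
  "coprime a b \<Longrightarrow> a \<ge> 1 \<Longrightarrow> b \<ge> 1 \<Longrightarrow>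
    num_subseqs (gen a b) = a + b - 1 \<and> Sx A (gen a b) = a - 1 \<and> Sx B (gen a b) = b - 1"
proof (induction a b rule: gen.induct)
  case (1 a b)
  show ?case
  proof (cases "a = b")
    case True
    then have "a = 1" "b = 1" using 1(3,4,5) by auto
    moreover have "{v. subseq v ([]::letter list)} = {[]}" by auto
    ultimately show ?thesis by (simp add: num_subseqs_def Sx_def gen_eq)
  next
    case False
    show ?thesis
    proof (cases "a > b")
      case True
      have cp: "coprime (a - b) b" using 1(3) True
        by (simp add: coprime_iff_gcd_eq_1 gcd_diff1_nat)
      have IH: "num_subseqs (gen (a-b) b) = a - b + b - 1 \<and> Sx A (gen (a-b) b) = a - b - 1 \<and> Sx B (gen (a-b) b) = b - 1"
        using 1(1) False True cp 1(4,5) by auto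
      have g: "gen a b = A # gen (a-b) b" using True 1(4,5) by (simp add: gen_eq)
      have sa: "Sx A (gen a b) = a - 1" using IH True by (auto simp: g Sx_def aft_Cons split: if_splits)
      have sb: "Sx B (gen a b) = b - 1" using IH by (auto simp: g Sx_def aft_Cons split: if_splits)
      show ?thesis using num_subseqs_rec[of "gen a b"] sa sb 1(4,5) True by simp
    next
      case F2: False
      then have lt: "a < b" using False by simp
      have cp: "coprime a (b - a)" using 1(3) lt
        by (metis coprime_iff_gcd_eq_1 gcd_diff1_nat gcd.commute less_imp_le_nat)
      have IH: "num_subseqs (gen a (b-a)) = a + (b - a) - 1 \<and> Sx A (gen a (b-a)) = a - 1 \<and> Sx B (gen a (b-a)) = b - a - 1"
        using 1(2) False F2 cp 1(4,5) lt by auto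
      have g: "gen a b = B # gen a (b-a)" using lt 1(4,5) by (simp add: gen_eq)
      have sa: "Sx A (gen a b) = a - 1" using IH by (auto simp: g Sx_def aft_Cons split: if_splits)
      have sb: "Sx B (gen a b) = b - 1" using IH lt by (auto simp: g Sx_def aft_Cons split: if_splits)
      show ?thesis using num_subseqs_rec[of "gen a b"] sa sb 1(4,5) lt by simp
    qed
  qed
qed

definition stp :: "real \<Rightarrow> real" where
  "stp r = (if r > 1 then r - 1 else r / (1 - r))"

fun rho :: "real \<Rightarrow> nat \<Rightarrow> real" where
  "rho x 0 = x / (1 - x)"
| "rho x (Suc n) = stp (rho x n)"

lemma frac_irr: "x \<notin> \<rat> \<Longrightarrow> frac x \<notin> \<rat>"
proof
  assume "x \<notin> \<rat>" "frac x \<in> \<rat>"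
  then have "frac x + of_int \<lfloor>x\<rfloor> \<in> \<rat>" by simp
  then show False using \<open>x \<notin> \<rat>\<close> by (simp add: frac_def)
qed

lemma inv_irr: "(x::real) \<notin> \<rat> \<Longrightarrow> 1 / x \<notin> \<rat>"
proof
  assume "x \<notin> \<rat>" "1 / x \<in> \<rat>"
  then have "1 / (1 / x) \<in> \<rat>" using Rats_divide[OF Rats_1] by blast
  then show False using \<open>x \<notin> \<rat>\<close> by simp
qed

lemma irr_not_int: "(x::real) \<notin> \<rat> \<Longrightarrow> frac x > 0"
  by (metis Ints_subset_Rats frac_eq_0_iff frac_ge_0 less_eq_real_def subsetD)

context
  fixes xi :: real and C :: int
  assumes irr: "xi \<notin> \<rat>" and bnd: "pq_bounded_by xi C"
    and xpos: "0 < xi" and xlt: "xi < 1"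
begin

lemma cf_irr: "cf_rem xi k \<notin> \<rat>"
  by (induction k) (auto simp: irr frac_irr inv_irr)

lemma cf_gt1: "k \<ge> 1 \<Longrightarrow> cf_rem xi k > 1"
proof (cases k)
  case (Suc j)
  have "frac (cf_rem xi j) > 0" using irr_not_int cf_irr by blast
  moreover have "frac (cf_rem xi j) < 1" by (rule frac_lt_1)
  ultimately have "1 < 1 / frac (cf_rem xi j)" by (simp add: less_divide_eq)
  then show ?thesis using Suc by simp
qed auto

lemma cf_lt: "cf_rem xi k < real_of_int C + 1"
proof -
  have "\<lfloor>cf_rem xi k\<rfloor> \<le> C" using bnd by (simp add: pq_bounded_by_def partial_quotient_def)
  then show ?thesis by linarith
qed

lemma cf_frac: "frac (cf_rem xi k) = 1 / cf_rem xi (Suc k)"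
  using irr_not_int[OF cf_irr[of k]] by simp

definition Inv0 :: "real \<Rightarrow> bool" where
  "Inv0 t \<longleftrightarrow> (\<exists>k i. k \<ge> 1 \<and> cf_rem xi k - real i > 0 \<and> t = cf_rem xi k - real i)"

lemma Inv0_irr: "Inv0 t \<Longrightarrow> t \<notin> \<rat>"
proof
  assume "Inv0 t" "t \<in> \<rat>"
  then obtain k i where "t = cf_rem xi k - real i" unfolding Inv0_def by blast
  then have "cf_rem xi k = t + real i" by simp
  also have "\<dots> \<in> \<rat>" using \<open>t \<in> \<rat>\<close> by simp
  finally show False using cf_irr by blast
qed

lemma Inv0_bnd: "Inv0 t \<Longrightarrow> 0 < t \<and> t < real_of_int C + 1"
proof -
  assume "Inv0 t"
  then obtain k i where k: "cf_rem xi k - real i > 0" "t = cf_rem xi k - real i"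
    unfolding Inv0_def by blast
  then show ?thesis using cf_lt[of k] by simp
qed

lemma Inv0_lt1: "Inv0 t \<Longrightarrow> t < 1 \<Longrightarrow> Inv0 (1 / t)"
proof -
  assume "Inv0 t" "t < 1"
  then obtain k i where k: "k \<ge> 1" "cf_rem xi k - real i > 0" "t = cf_rem xi k - real i"
    unfolding Inv0_def by blast
  have "\<lfloor>cf_rem xi k\<rfloor> = int i" using k \<open>t < 1\<close> by (intro floor_unique) auto
  then have "t = frac (cf_rem xi k)" using k by (simp add: frac_def)
  then have "1 / t = cf_rem xi (Suc k) - real 0" by simp
  moreover have "cf_rem xi (Suc k) - real 0 > 0" using cf_gt1[of "Suc k"] by (simp del: cf_rem.simps)
  ultimately show ?thesis unfolding Inv0_def by (intro exI[of _ "Suc k"] exI[of _ 0]) auto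
qed

lemma Inv0_gt1: "Inv0 t \<Longrightarrow> t > 1 \<Longrightarrow> Inv0 (t - 1)"
proof -
  assume "Inv0 t" "t > 1"
  then obtain k i where k: "k \<ge> 1" "cf_rem xi k - real i > 0" "t = cf_rem xi k - real i"
    unfolding Inv0_def by blast
  then show ?thesis unfolding Inv0_def using \<open>t > 1\<close>
    by (intro exI[of _ k] exI[of _ "Suc i"]) auto
qed

definition Inv :: "real \<Rightarrow> bool" where
  "Inv r \<longleftrightarrow> r > 0 \<and> (Inv0 r \<or> Inv0 (1 / r))"

lemma Inv_props:
  assumes "Inv r" shows "r > 0" "r \<noteq> 1" "r < real_of_int C + 1" "1 / r < real_of_int C + 1"
proof -
  show "r > 0" using assms Inv_def by auto
  show "r \<noteq> 1"
  proof
    assume "r = 1"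
    then have "Inv0 1" using assms unfolding Inv_def by auto
    then show False using Inv0_irr by fastforce
  qed
  have C1: "C \<ge> 1" using cf_lt[of 1] cf_gt1[of 1] by (simp del: cf_rem.simps)
  show "r < real_of_int C + 1"
  proof (cases "Inv0 r")
    case True then show ?thesis using Inv0_bnd by blast
  next
    case False
    then have i: "Inv0 (1/r)" using assms Inv_def by auto
    show ?thesis
    proof (cases "r > 1")
      case True
      then have "1/r < 1" by simp
      from Inv0_lt1[OF i this] Inv0_bnd show ?thesis by simp
    next
      case False then show ?thesis using C1 by linarith
    qed
  qed
  show "1 / r < real_of_int C + 1"
  proof (cases "Inv0 (1/r)")
    case True then show ?thesis using Inv0_bnd by blast
  next
    case False
    then have i: "Inv0 r" using assms Inv_def by auto
    show ?thesis
    proof (cases "r < 1")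
      case True
      from Inv0_lt1[OF i this] Inv0_bnd show ?thesis by simp
    next
      case False then have "1 / r \<le> 1" by simp
      then show ?thesis using C1 by linarith
    qed
  qed
qed

lemma Inv_stp: assumes "Inv r" shows "Inv (stp r)"
proof -
  have r0: "r > 0" "r \<noteq> 1" using Inv_props assms by auto
  show ?thesis
  proof (cases "r > 1")
    case True
    have "Inv0 r"
    proof (cases "Inv0 r")
      case False
      then have "Inv0 (1/r)" using assms unfolding Inv_def by blast
      moreover have "1/r < 1" using True by simp
      ultimately show ?thesis using Inv0_lt1[of "1/r"] by simp
    qed
    from Inv0_gt1[OF this True] show ?thesis using True by (simp add: stp_def Inv_def)
  next
    case False
    then have lt: "r < 1" using r0 by simp
    have "Inv0 (1/r)"
    proof (cases "Inv0 (1/r)")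
      case False
      then have "Inv0 r" using assms unfolding Inv_def by blast
      then show ?thesis using Inv0_lt1[of r] lt by simp
    qed
    moreover have "1/r > 1" using lt r0 by simp
    ultimately have "Inv0 (1/r - 1)" by (rule Inv0_gt1)
    moreover have "1 / stp r = 1/r - 1" using lt r0 by (simp add: stp_def field_simps)
    moreover have "stp r > 0" using lt r0 by (simp add: stp_def)
    ultimately show ?thesis by (simp add: Inv_def)
  qed
qed

lemma Inv_rho: "Inv (rho xi n)"
proof (induction n)
  case 0
  have fx: "frac xi = xi" using xpos xlt by (simp add: frac_eq)
  have "1 / (xi / (1 - xi)) = cf_rem xi 1 - real 1"
    using xpos xlt by (simp add: fx field_simps)
  moreover have "cf_rem xi 1 - real 1 > 0" using cf_gt1[of 1] by simp
  ultimately have "Inv0 (1 / rho xi 0)" unfolding Inv0_def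
    by (intro exI[of _ 1] exI[of _ 1]) auto
  moreover have "rho xi 0 > 0" using xpos xlt by simp
  ultimately show ?case by (simp add: Inv_def)
next
  case (Suc n) then show ?case by (simp add: Inv_stp)
qed

end

lemma div_bound:
  fixes a' b' qu qv pu pv r c N a xi :: real
  assumes a1: "a' \<ge> 1" and b1: "b' \<ge> 1" and qu1: "qu \<ge> 1" and qv1: "qv \<ge> 1" and c1: "c \<ge> 1"
    and r0: "r > 0"
    and aeq: "a = a' * pu + b' * pv" and Neq: "N = a' * qu + b' * qv" and det: "pu * qv = pv * qu + 1"
    and xeq: "xi = (r * pu + pv) / (r * qu + qv)"
    and J1: "qv / qu + r < c + 2" and J2: "qu / qv + 1 / r < c + 2"
    and side: "(r < 1 \<and> b' \<le> a' \<and> 1 - r > 1 / (c + 2)) \<or> (r > 1 \<and> a' \<le> b' \<and> r - 1 \<ge> r / (c + 2))"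
  shows "a' + b' \<le> 8 * N * sqrt (\<bar>xi - a / N\<bar> * c ^ 3)"
proof -
  define Q where "Q = qu + qv"
  have Npos: "N > 0" using Neq a1 b1 qu1 qv1 by (simp add: add_pos_pos)
  have D: "r * qu + qv > 0" using r0 qu1 qv1 by (simp add: add_pos_pos)
  have delta: "xi - a / N = (r * b' - a') / ((r * qu + qv) * N)"
  proof -
    have "xi - a / N = ((r * pu + pv) * N - a * (r * qu + qv)) / ((r * qu + qv) * N)"
      using D Npos by (simp add: xeq field_simps)
    also have "(r * pu + pv) * N - a * (r * qu + qv) = r * b' * (pu * qv - pv * qu) - a' * (pu * qv - pv * qu)"
      by (simp add: aeq Neq algebra_simps)
    also have "\<dots> = r * b' - a'" using det by simp
    finally show ?thesis .
  qed
  have c2: "c + 2 > 0" "c + 3 > 0" using c1 by auto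
  have quQ: "qu * (c + 3) \<ge> Q"
  proof -
    have "qv / qu < c + 2" using J1 r0 by linarith
    then have "qv < (c + 2) * qu" using qu1 by (simp add: field_simps)
    then show ?thesis unfolding Q_def by (simp add: algebra_simps)
  qed
  have qvQ: "qv * (c + 3) \<ge> Q"
  proof -
    have "1 / r > 0" using r0 by simp
    then have "qu / qv < c + 2" using J2 by linarith
    then have "qu < (c + 2) * qv" using qv1 by (simp add: field_simps)
    then show ?thesis unfolding Q_def by (simp add: algebra_simps)
  qed
  have NQ: "N * (c + 3) \<ge> (a' + b') * Q"
  proof -
    have "N * (c + 3) = a' * (qu * (c + 3)) + b' * (qv * (c + 3))" by (simp add: Neq algebra_simps)
    also have "\<dots> \<ge> a' * Q + b' * Q"
      using quQ qvQ a1 b1 by (intro add_mono mult_left_mono) auto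
    finally show ?thesis by (simp add: algebra_simps)
  qed
  have Qpos: "Q > 0" unfolding Q_def using qu1 qv1 by simp
  have key: "\<bar>r * b' - a'\<bar> * (2 * (c + 2) * Q) \<ge> (a' + b') * (r * qu + qv)"
    using side
  proof
    assume s: "r < 1 \<and> b' \<le> a' \<and> 1 - r > 1 / (c + 2)"
    have "r * b' \<le> r * a'" using s r0 by (intro mult_left_mono) auto
    moreover have "a' - r * b' \<le> \<bar>r * b' - a'\<bar>" by linarith
    ultimately have "\<bar>r * b' - a'\<bar> \<ge> (1 - r) * a'"
      by (simp add: algebra_simps)
    moreover have "(1 - r) * (c + 2) \<ge> 1" using s c2 by (simp add: field_simps)
    ultimately have "\<bar>r * b' - a'\<bar> * (c + 2) \<ge> a'"
    proof -
      assume X: "\<bar>r * b' - a'\<bar> \<ge> (1 - r) * a'" and Y: "(1 - r) * (c + 2) \<ge> 1"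
      have "a' = a' * 1" by simp
      also have "\<dots> \<le> a' * ((1 - r) * (c + 2))" using Y a1 by (intro mult_left_mono) auto
      also have "\<dots> = (1 - r) * a' * (c + 2)" by simp
      also have "\<dots> \<le> \<bar>r * b' - a'\<bar> * (c + 2)" using X c2 by (intro mult_right_mono) auto
      finally show ?thesis .
    qed
    then have h: "\<bar>r * b' - a'\<bar> * (2 * (c + 2)) \<ge> a' + b'" using s by linarith
    have "r * qu + qv \<le> Q" unfolding Q_def using s qu1 mult_right_mono[of r 1 qu] by simp
    then have "(a' + b') * (r * qu + qv) \<le> (a' + b') * Q" using a1 b1 by (intro mult_left_mono) auto
    also have "\<dots> \<le> \<bar>r * b' - a'\<bar> * (2 * (c + 2)) * Q" using h Qpos by (intro mult_right_mono) auto
    finally show ?thesis by (simp add: algebra_simps)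
  next
    assume s: "r > 1 \<and> a' \<le> b' \<and> r - 1 \<ge> r / (c + 2)"
    have "b' \<ge> a'" using s by simp
    moreover have "r * b' - a' \<le> \<bar>r * b' - a'\<bar>" by linarith
    ultimately have "\<bar>r * b' - a'\<bar> \<ge> (r - 1) * b'"
      by (simp add: algebra_simps)
    moreover have "(r - 1) * (c + 2) \<ge> r" using s c2 by (simp add: field_simps)
    ultimately have "\<bar>r * b' - a'\<bar> * (c + 2) \<ge> r * b'"
    proof -
      assume X: "\<bar>r * b' - a'\<bar> \<ge> (r - 1) * b'" and Y: "(r - 1) * (c + 2) \<ge> r"
      have "r * b' = b' * r" by simp
      also have "\<dots> \<le> b' * ((r - 1) * (c + 2))" using Y b1 by (intro mult_left_mono) auto
      also have "\<dots> = (r - 1) * b' * (c + 2)" by simp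
      also have "\<dots> \<le> \<bar>r * b' - a'\<bar> * (c + 2)" using X c2 by (intro mult_right_mono) auto
      finally show ?thesis .
    qed
    moreover have "r * a' \<le> r * b'" using s r0 by (intro mult_left_mono) auto
    ultimately have h: "\<bar>r * b' - a'\<bar> * (2 * (c + 2)) \<ge> r * (a' + b')"
      by (simp add: algebra_simps)
    have "r * qu + qv \<le> r * Q" unfolding Q_def using s qv1 by (simp add: algebra_simps)
    then have "(a' + b') * (r * qu + qv) \<le> (a' + b') * (r * Q)" using a1 b1 by (intro mult_left_mono) auto
    also have "\<dots> = r * (a' + b') * Q" by simp
    also have "\<dots> \<le> \<bar>r * b' - a'\<bar> * (2 * (c + 2)) * Q" using h Qpos by (intro mult_right_mono) auto
    finally show ?thesis by (simp add: algebra_simps)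
  qed
  define d where "d = \<bar>xi - a / N\<bar>"
  have dN: "d * N * (r * qu + qv) = \<bar>r * b' - a'\<bar>"
    unfolding d_def delta using D Npos by (simp add: abs_divide abs_mult)
  have "(a' + b') * (a' + b') * (r * qu + qv) \<le> (a' + b') * (\<bar>r * b' - a'\<bar> * (2 * (c + 2) * Q))"
    using key a1 b1 by (simp add: mult.assoc mult_left_mono)
  also have "\<dots> = 2 * (c + 2) * \<bar>r * b' - a'\<bar> * ((a' + b') * Q)" by (simp add: algebra_simps)
  also have "\<dots> \<le> 2 * (c + 2) * \<bar>r * b' - a'\<bar> * (N * (c + 3))"
    using NQ c2 by (intro mult_left_mono) auto
  also have "\<dots> = 2 * (c + 2) * (c + 3) * (d * N * N) * (r * qu + qv)" by (subst dN[symmetric]) (simp add: algebra_simps)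
  finally have "(a' + b') * (a' + b') \<le> 2 * (c + 2) * (c + 3) * (d * N * N)" using D by simp
  also have "\<dots> \<le> 64 * c^3 * (d * N * N)"
  proof (intro mult_right_mono)
    have "2 * (c + 2) * (c + 3) \<le> 2 * (3*c) * (4*c)" using c1 by (intro mult_mono) auto
    also have "\<dots> = 24 * c^2" by (simp add: power2_eq_square)
    also have "\<dots> \<le> 64 * c^3" using c1 by (simp add: power2_eq_square power3_eq_cube)
    finally show "2 * (c + 2) * (c + 3) \<le> 64 * c^3" .
    show "0 \<le> d * N * N" unfolding d_def using Npos by simp
  qed
  finally have sq: "(a' + b')^2 \<le> (8 * N)^2 * (d * c^3)" by (simp add: power2_eq_square algebra_simps)
  have "a' + b' = sqrt ((a' + b')^2)" using a1 b1 by simp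
  also have "\<dots> \<le> sqrt ((8 * N)^2 * (d * c^3))" using sq by (rule real_sqrt_le_mono)
  also have "\<dots> = 8 * N * sqrt (d * c^3)" using Npos by (simp add: real_sqrt_mult)
  finally show ?thesis unfolding d_def .
qed

lemma gen_len: "length (gen a b) \<le> a + b"
proof (induction a b rule: gen.induct)
  case (1 a b)
  show ?case
  proof (cases "a = 0 \<or> b = 0 \<or> a = b")
    case True then show ?thesis by (subst gen.simps) simp
  next
    case False
    show ?thesis
    proof (cases "a > b")
      case True
      then have "gen a b = A # gen (a - b) b" using False by (simp add: gen_eq)
      moreover have "length (gen (a - b) b) \<le> a - b + b" using 1(1) False True by blast
      ultimately show ?thesis using True False by simp
    next
      case F2: False
      then have "gen a b = B # gen a (b - a)" using False by (simp add: gen_eq)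
      moreover have "length (gen a (b - a)) \<le> a + (b - a)" using 1(2) False F2 by blast
      ultimately show ?thesis using F2 False by simp
    qed
  qed
qed

context
  fixes rh :: "nat \<Rightarrow> real" and c xi :: real and a N :: nat
  assumes R1: "\<And>n. rh n > 0 \<and> rh n \<noteq> 1 \<and> rh n < c + 1 \<and> 1 / rh n < c + 1"
    and R2: "\<And>n. rh (Suc n) = stp (rh n)"
    and c1: "c \<ge> 1"
begin

lemma main_ind:
  "a' \<ge> 1 \<Longrightarrow> b' \<ge> 1 \<Longrightarrow> a = a' * pu + b' * pv \<Longrightarrow> N = a' * qu + b' * qv \<Longrightarrow>
   pu * qv = pv * qu + 1 \<Longrightarrow> qu \<ge> 1 \<Longrightarrow> qv \<ge> 1 \<Longrightarrow>
   xi = (rh n * pu + pv) / (rh n * qu + qv) \<Longrightarrow>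
   real qv / real qu + rh n < c + 2 \<Longrightarrow> real qu / real qv + 1 / rh n < c + 2 \<Longrightarrow>
   2 * (1 + 1 / (c + 3)) ^ n \<le> real (qu + qv) \<Longrightarrow>
   \<exists>m. real (length (gen a' b')) \<le> real m + 8 * real N * sqrt (\<bar>xi - a / N\<bar> * c ^ 3)
       \<and> 2 * (1 + 1 / (c + 3)) ^ (n + m) \<le> real N"
proof (induction a' b' arbitrary: pu qu pv qv n rule: gen.induct)
  case (1 a' b')
  define X where "X = 8 * real N * sqrt (\<bar>xi - a / N\<bar> * c ^ 3)"
  have "\<bar>xi - a / N\<bar> * c ^ 3 \<ge> 0" using c1 by simp
  then have X0: "X \<ge> 0" unfolding X_def by simp
  have QN: "qu + qv \<le> N"
  proof -
    have "qu + qv \<le> a' * qu + b' * qv" using 1(3,4) by (intro add_mono) auto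
    then show ?thesis using 1(6) by simp
  qed
  have QNr: "2 * (1 + 1 / (c + 3)) ^ n \<le> real N" using 1(13) QN by linarith
  have rn: "rh n > 0" "rh n \<noteq> 1" using R1 by auto
  have c3: "c + 3 > 0" "c + 2 > 0" using c1 by auto
  show ?case
  proof (cases "a' = b'")
    case True
    then have "gen a' b' = []" by (simp add: gen_eq)
    then show ?thesis using QNr X0 by (intro exI[of _ 0]) (simp add: X_def)
  next
    case neq: False
    show ?thesis
    proof (cases "a' > b'")
      case gt: True
      have g: "gen a' b' = A # gen (a' - b') b'" using gt 1(4) by (simp add: gen_eq)
      show ?thesis
      proof (cases "rh n > 1")
        case True
        have rs: "rh (Suc n) = rh n - 1" using R2 True by (simp add: stp_def)
        have quQ: "real qu * (c + 3) \<ge> real (qu + qv)"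
        proof -
          have "real qv / real qu < c + 2" using 1(11) rn by linarith
          then have "real qv < (c + 2) * real qu" using 1(8) by (simp add: field_simps)
          then show ?thesis by (simp add: algebra_simps)
        qed
        have grow: "2 * (1 + 1 / (c + 3)) ^ Suc n \<le> real (qu + (qu + qv))"
        proof -
          have "2 * (1 + 1 / (c + 3)) ^ Suc n = (2 * (1 + 1 / (c + 3)) ^ n) * (1 + 1 / (c + 3))" by simp
          also have "\<dots> \<le> real (qu + qv) * (1 + 1 / (c + 3))" using 1(13) c3 by (intro mult_right_mono) auto
          also have "\<dots> = real (qu + qv) + real (qu + qv) / (c + 3)" by (simp add: algebra_simps)
          also have "\<dots> \<le> real (qu + qv) + real qu" using quQ c3 by (simp add: divide_le_eq)
          finally show ?thesis by simp
        qed
        have IH: "\<exists>m. real (length (gen (a' - b') b')) \<le> real m + X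
            \<and> 2 * (1 + 1 / (c + 3)) ^ (Suc n + m) \<le> real N"
          unfolding X_def
        proof (rule 1(1)[of pu "pu + pv" qu "qu + qv" "Suc n"])
          show "\<not> (a' = 0 \<or> b' = 0 \<or> a' = b')" using neq 1(3,4) by auto
          show "b' < a'" by (rule gt)
          show "1 \<le> a' - b'" using gt by simp
          show "1 \<le> b'" by (rule 1(4))
          obtain k where ak: "a' = k + b'" using gt by (metis less_imp_le_nat le_add_diff_inverse2)
          show "a = (a' - b') * pu + b' * (pu + pv)" using 1(5) unfolding ak
            by (simp add: algebra_simps)
          show "N = (a' - b') * qu + b' * (qu + qv)" using 1(6) unfolding ak
            by (simp add: algebra_simps)
          show "pu * (qu + qv) = (pu + pv) * qu + 1" using 1(7) by (simp add: algebra_simps)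
          show "1 \<le> qu" by (rule 1(8))
          show "1 \<le> qu + qv" using 1(8) by simp
          show "xi = (rh (Suc n) * real pu + real (pu + pv)) / (rh (Suc n) * real qu + real (qu + qv))"
            using 1(10) by (simp add: rs algebra_simps)
          show "real (qu + qv) / real qu + rh (Suc n) < c + 2"
            using 1(11) 1(8) by (simp add: rs add_divide_distrib)
          have "real qu / real (qu + qv) \<le> 1" using 1(8) by (subst divide_le_eq_1_pos) auto
          moreover have "1 / rh (Suc n) < c + 1" using R1 by blast
          ultimately show "real qu / real (qu + qv) + 1 / rh (Suc n) < c + 2" by linarith
          show "2 * (1 + 1 / (c + 3)) ^ Suc n \<le> real (qu + (qu + qv))" by (rule grow)
        qed
        then obtain m where m: "real (length (gen (a' - b') b')) \<le> real m + X"
            "2 * (1 + 1 / (c + 3)) ^ (Suc n + m) \<le> real N" by blast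
        have l1: "real (length (gen a' b')) = real (length (gen (a' - b') b')) + 1" by (subst g) simp
        have e: "n + Suc m = Suc n + m" by simp
        have "real (length (gen a' b')) \<le> real (Suc m) + X" using m(1) l1 by simp
        moreover have "2 * (1 + 1 / (c + 3)) ^ (n + Suc m) \<le> real N" using m(2) by (simp only: e)
        ultimately show ?thesis unfolding X_def by blast
      next
        case False
        then have lt: "rh n < 1" using rn by simp
        have "rh (Suc n) = rh n / (1 - rh n)" using R2 lt by (simp add: stp_def)
        then have "rh n / (1 - rh n) < c + 1" using R1[of "Suc n"] by simp
        then have "rh n < (c + 1) * (1 - rh n)" using lt by (simp add: field_simps)
        then have side: "1 - rh n > 1 / (c + 2)" using c3 by (simp add: field_simps)
        have "real a' + real b' \<le> X" unfolding X_def
        proof (rule div_bound[where pu = "real pu" and pv = "real pv" and qu = "real qu" and qv = "real qv" and r = "rh n"])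
          show "1 \<le> real a'" "1 \<le> real b'" "1 \<le> real qu" "1 \<le> real qv" using 1(3,4,8,9) by auto
          show "1 \<le> c" by (rule c1)
          show "0 < rh n" by (rule rn(1))
          show "real a = real a' * real pu + real b' * real pv" using 1(5) by simp
          show "real N = real a' * real qu + real b' * real qv" using 1(6) by simp
          show "real pu * real qv = real pv * real qu + 1" using 1(7) by (metis of_nat_1 of_nat_add of_nat_mult)
          show "xi = (rh n * real pu + real pv) / (rh n * real qu + real qv)" by (rule 1(10))
          show "real qv / real qu + rh n < c + 2" by (rule 1(11))
          show "real qu / real qv + 1 / rh n < c + 2" by (rule 1(12))
          show "rh n < 1 \<and> real b' \<le> real a' \<and> 1 / (c + 2) < 1 - rh n \<or>
                1 < rh n \<and> real a' \<le> real b' \<and> rh n / (c + 2) \<le> rh n - 1"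
            using lt gt side by simp
        qed
        then have "real (length (gen a' b')) \<le> X" using gen_len[of a' b'] by linarith
        then show ?thesis using QNr by (intro exI[of _ 0]) (simp add: X_def)
      qed
    next
      case False
      then have lt': "a' < b'" using neq by simp
      have g: "gen a' b' = B # gen a' (b' - a')" using lt' 1(3) by (simp add: gen_eq)
      show ?thesis
      proof (cases "rh n < 1")
        case True
        have rs: "rh (Suc n) = rh n / (1 - rh n)" using R2 True by (simp add: stp_def)
        have qvQ: "real qv * (c + 3) \<ge> real (qu + qv)"
        proof -
          have "1 / rh n > 0" using rn by simp
          then have "real qu / real qv < c + 2" using 1(12) by linarith
          then have "real qu < (c + 2) * real qv" using 1(9) by (simp add: field_simps)
          then show ?thesis by (simp add: algebra_simps)
        qed
        have grow: "2 * (1 + 1 / (c + 3)) ^ Suc n \<le> real ((qu + qv) + qv)"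
        proof -
          have "2 * (1 + 1 / (c + 3)) ^ Suc n = (2 * (1 + 1 / (c + 3)) ^ n) * (1 + 1 / (c + 3))" by simp
          also have "\<dots> \<le> real (qu + qv) * (1 + 1 / (c + 3))" using 1(13) c3 by (intro mult_right_mono) auto
          also have "\<dots> = real (qu + qv) + real (qu + qv) / (c + 3)" by (simp add: algebra_simps)
          also have "\<dots> \<le> real (qu + qv) + real qv" using qvQ c3 by (simp add: divide_le_eq)
          finally show ?thesis by simp
        qed
        have IH: "\<exists>m. real (length (gen a' (b' - a'))) \<le> real m + X
            \<and> 2 * (1 + 1 / (c + 3)) ^ (Suc n + m) \<le> real N"
          unfolding X_def
        proof (rule 1(2)[of "pu + pv" pv "qu + qv" qv "Suc n"])
          show "\<not> (a' = 0 \<or> b' = 0 \<or> a' = b')" using neq 1(3,4) by auto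
          show "\<not> b' < a'" using lt' by simp
          show "1 \<le> a'" by (rule 1(3))
          show "1 \<le> b' - a'" using lt' by simp
          obtain k where bk: "b' = k + a'" using lt' by (metis less_imp_le_nat le_add_diff_inverse2)
          show "a = a' * (pu + pv) + (b' - a') * pv" using 1(5) unfolding bk
            by (simp add: algebra_simps)
          show "N = a' * (qu + qv) + (b' - a') * qv" using 1(6) unfolding bk
            by (simp add: algebra_simps)
          show "(pu + pv) * qv = pv * (qu + qv) + 1" using 1(7) by (simp add: algebra_simps)
          show "1 \<le> qv" by (rule 1(9))
          show "1 \<le> qu + qv" using 1(8) by simp
          have d: "1 - rh n > 0" using True by simp
          have nu: "rh (Suc n) * real (pu + pv) + real pv = (rh n * pu + pv) / (1 - rh n)"
            using d by (simp add: rs field_simps)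
          have de: "rh (Suc n) * real (qu + qv) + real qv = (rh n * qu + qv) / (1 - rh n)"
            using d by (simp add: rs field_simps)
          show "xi = (rh (Suc n) * real (pu + pv) + real pv) / (rh (Suc n) * real (qu + qv) + real qv)"
            unfolding nu de using 1(10) d by simp
          have "real qv / real (qu + qv) \<le> 1" using 1(8) by (subst divide_le_eq_1_pos) auto
          moreover have "rh (Suc n) < c + 1" using R1 by blast
          ultimately show "real qv / real (qu + qv) + rh (Suc n) < c + 2" by linarith
          have "1 / rh (Suc n) = 1 / rh n - 1" using rn d by (simp add: rs field_simps)
          moreover have "real (qu + qv) / real qv = real qu / real qv + 1" using 1(9) by (simp add: add_divide_distrib)
          ultimately show "real (qu + qv) / real qv + 1 / rh (Suc n) < c + 2" using 1(12) by linarith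
          show "2 * (1 + 1 / (c + 3)) ^ Suc n \<le> real (qu + qv + qv)" by (rule grow)
        qed
        then obtain m where m: "real (length (gen a' (b' - a'))) \<le> real m + X"
            "2 * (1 + 1 / (c + 3)) ^ (Suc n + m) \<le> real N" by blast
        have l1: "real (length (gen a' b')) = real (length (gen a' (b' - a'))) + 1" by (subst g) simp
        have e: "n + Suc m = Suc n + m" by simp
        have "real (length (gen a' b')) \<le> real (Suc m) + X" using m(1) l1 by simp
        moreover have "2 * (1 + 1 / (c + 3)) ^ (n + Suc m) \<le> real N" using m(2) by (simp only: e)
        ultimately show ?thesis unfolding X_def by blast
      next
        case False
        then have gt1: "rh n > 1" using rn by simp
        have "rh (Suc n) = rh n - 1" using R2 gt1 by (simp add: stp_def)
        then have "1 / (rh n - 1) < c + 1" using R1[of "Suc n"] by simp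
        then have "1 < (c + 1) * (rh n - 1)" using gt1 by (simp add: field_simps)
        then have side: "rh n / (c + 2) \<le> rh n - 1" using c3 by (simp add: field_simps)
        have "real a' + real b' \<le> X" unfolding X_def
        proof (rule div_bound[where pu = "real pu" and pv = "real pv" and qu = "real qu" and qv = "real qv" and r = "rh n"])
          show "1 \<le> real a'" "1 \<le> real b'" "1 \<le> real qu" "1 \<le> real qv" using 1(3,4,8,9) by auto
          show "1 \<le> c" by (rule c1)
          show "0 < rh n" by (rule rn(1))
          show "real a = real a' * real pu + real b' * real pv" using 1(5) by simp
          show "real N = real a' * real qu + real b' * real qv" using 1(6) by simp
          show "real pu * real qv = real pv * real qu + 1" using 1(7) by (metis of_nat_1 of_nat_add of_nat_mult)
          show "xi = (rh n * real pu + real pv) / (rh n * real qu + real qv)" by (rule 1(10))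
          show "real qv / real qu + rh n < c + 2" by (rule 1(11))
          show "real qu / real qv + 1 / rh n < c + 2" by (rule 1(12))
          show "rh n < 1 \<and> real b' \<le> real a' \<and> 1 / (c + 2) < 1 - rh n \<or>
                1 < rh n \<and> real a' \<le> real b' \<and> rh n / (c + 2) \<le> rh n - 1"
            using gt1 lt' side by simp
        qed
        then have "real (length (gen a' b')) \<le> X" using gen_len[of a' b'] by linarith
        then show ?thesis using QNr by (intro exI[of _ 0]) (simp add: X_def)
      qed
    qed
  qed
qed

end

lemma ln_lower: assumes "c \<ge> (1::real)" shows "ln (1 + 1 / (c + 3)) \<ge> 1 / (c + 4)"
proof -
  have p: "c + 3 > 0" "c + 4 > 0" using assms by auto
  have "ln ((c + 3) / (c + 4)) \<le> (c + 3) / (c + 4) - 1" using p by (intro ln_le_minus_one) auto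
  also have "\<dots> = - (1 / (c + 4))" using p by (simp add: field_simps)
  finally have h: "ln ((c + 3) / (c + 4)) \<le> - (1 / (c + 4))" .
  have "1 + 1 / (c + 3) = (c + 4) / (c + 3)" using p by (simp add: field_simps)
  then have "ln (1 + 1 / (c + 3)) = - ln ((c + 3) / (c + 4))" using p by (simp add: ln_div)
  then show ?thesis using h by linarith
qed

theorem theorem4:
  "\<exists>K::real. K > 0 \<and>
     (\<forall>(C::int) (\<xi>::real) (N::nat) (a::nat).
        C \<ge> 1 \<longrightarrow> 0 < \<xi> \<longrightarrow> \<xi> < 1 \<longrightarrow> \<xi> \<notin> \<rat> \<longrightarrow> pq_bounded_by \<xi> C \<longrightarrow>
        N \<ge> 2 \<longrightarrow> 1 \<le> a \<longrightarrow> a \<le> N - 1 \<longrightarrow> coprime a N \<longrightarrow>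
        (let \<delta> = \<bar>\<xi> - real a / real N\<bar> in
           num_subseqs (gen a (N - a)) = N - 1 \<and>
           real (length (gen a (N - a)))
             \<le> K * (real_of_int C * ln (real N) + real N * sqrt (\<delta> * real_of_int C ^ 3))))"
proof (intro exI[of _ 8] conjI allI impI)
  show "(0::real) < 8" by simp
  fix C :: int and xi :: real and N a :: nat
  assume C1: "C \<ge> 1" and xpos: "0 < xi" and xlt: "xi < 1" and irr: "xi \<notin> \<rat>"
    and bnd: "pq_bounded_by xi C" and N2: "N \<ge> 2" and a1: "1 \<le> a" and aN: "a \<le> N - 1"
    and cop: "coprime a N"
  define c where "c = real_of_int C"
  have c1: "c \<ge> 1" using C1 by (simp add: c_def)
  define d where "d = \<bar>xi - real a / real N\<bar>"
  have cop2: "coprime a (N - a)"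
  proof -
    have "gcd (N - a) a = gcd N a" using aN N2 by (intro gcd_diff1_nat) auto
    then show ?thesis using cop by (simp add: coprime_iff_gcd_eq_1 gcd.commute)
  qed
  have cnt: "num_subseqs (gen a (N - a)) = N - 1"
    using gen_count[OF cop2] a1 aN N2 by auto
  have R1: "\<And>n. rho xi n > 0 \<and> rho xi n \<noteq> 1 \<and> rho xi n < c + 1 \<and> 1 / rho xi n < c + 1"
    using Inv_props[OF irr bnd xpos xlt Inv_rho[OF irr bnd xpos xlt]] unfolding c_def by blast
  have R2: "\<And>n. rho xi (Suc n) = stp (rho xi n)" by simp
  have r0: "rho xi 0 = xi / (1 - xi)" by simp
  have r0p: "rho xi 0 > 0" "rho xi 0 < c + 1" "1 / rho xi 0 < c + 1" using R1[of 0] by (auto simp del: rho.simps)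
  have "\<exists>m. real (length (gen a (N - a))) \<le> real m + 8 * real N * sqrt (\<bar>xi - a / N\<bar> * c ^ 3)
       \<and> 2 * (1 + 1 / (c + 3)) ^ (0 + m) \<le> real N"
  proof (rule main_ind[where rh = "rho xi" and c = c and xi = xi and a = a and N = N and a' = a and b' = "N - a"
      and pu = 1 and pv = 0 and qu = 1 and qv = 1 and n = 0, OF R1 R2 c1])
    show "1 \<le> a" by (rule a1)
    show "1 \<le> N - a" using aN N2 by simp
    show "a = a * 1 + (N - a) * 0" by simp
    show "N = a * 1 + (N - a) * 1" using aN N2 by simp
    show "1 * 1 = 0 * 1 + (1::nat)" by simp
    show "1 \<le> (1::nat)" by simp
    show "1 \<le> (1::nat)" by simp
    show "xi = (rho xi 0 * real 1 + real 0) / (rho xi 0 * real 1 + real 1)"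
      using xpos xlt by (simp add: field_simps)
    show "real 1 / real 1 + rho xi 0 < c + 2" using r0p by simp
    show "real 1 / real 1 + 1 / rho xi 0 < c + 2" using r0p by simp
    show "2 * (1 + 1 / (c + 3)) ^ 0 \<le> real (1 + 1)" by simp
  qed
  then obtain m where m1: "real (length (gen a (N - a))) \<le> real m + 8 * real N * sqrt (d * c ^ 3)"
    and m20: "2 * (1 + 1 / (c + 3)) ^ (0 + m) \<le> real N" unfolding d_def by blast
  have m2: "2 * (1 + 1 / (c + 3)) ^ m \<le> real N" using m20 by (simp only: add_0)
  have Npos: "real N > 0" using N2 by simp
  have "c + 3 > 0" using c1 by simp
  then have "1 / (c + 3) > 0" by simp
  then have bpos: "1 + 1 / (c + 3) > 0" by linarith
  define b where "b = 1 + 1 / (c + 3)"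
  have bpos': "b > 0" using bpos by (simp add: b_def)
  have m2': "2 * b ^ m \<le> real N" using m2 by (simp add: b_def)
  have "ln (2 * b ^ m) \<le> ln (real N)"
    using m2' bpos' Npos by (subst ln_le_cancel_iff) auto
  moreover have "ln (2 * b ^ m) = ln 2 + ln (b ^ m)" using bpos' by (simp add: ln_mult)
  moreover have "ln (b ^ m) = real m * ln b" by (rule ln_realpow)
  moreover have "ln (2::real) > 0" by simp
  ultimately have lm: "real m * ln b \<le> ln (real N)" by linarith
  have "real m * (1 / (c + 4)) \<le> real m * ln b"
    using ln_lower[OF c1] unfolding b_def by (intro mult_left_mono) auto
  then have "real m / (c + 4) \<le> ln (real N)" using lm by simp
  then have "real m \<le> ln (real N) * (c + 4)" using c1 by (simp add: pos_divide_le_eq)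
  then have mb: "real m \<le> (c + 4) * ln (real N)" by (metis mult.commute)
  have lnN: "ln (real N) \<ge> 0" using N2 by simp
  have "(c + 4) * ln (real N) \<le> (8 * c) * ln (real N)" using c1 lnN by (intro mult_right_mono) auto
  moreover have "8 * (c * ln (real N) + real N * sqrt (d * c ^ 3)) = (8 * c) * ln (real N) + 8 * real N * sqrt (d * c ^ 3)"
    by (simp add: algebra_simps)
  ultimately have "real (length (gen a (N - a))) \<le> 8 * (c * ln (real N) + real N * sqrt (d * c ^ 3))"
    using m1 mb by linarith
  then show "let \<delta> = \<bar>xi - real a / real N\<bar> in
           num_subseqs (gen a (N - a)) = N - 1 \<and>
           real (length (gen a (N - a)))
             \<le> 8 * (real_of_int C * ln (real N) + real N * sqrt (\<delta> * real_of_int C ^ 3))"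
    using cnt unfolding Let_def d_def c_def by simp
qed


end
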